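(* Let $X$ be a metric space, $n\ge0$, and let $D^{(n+1)}_X$ be an $n$-dimensional control function of $X$. Define inductively $D^{(i+1)}_X(r)=D^{(i)}_X(3r)+2r$ for all $i\ge n+1$. Then for every $k\ge n+1$, $D^{(k)}_X$ is an $(n,k)$-dimensional control function of $X$.
   Context: A family of subsets of $X$ is $r$-disjoint if $d(a,b)\ge r$ whenever $a,b$ lie in different members; it is $D$-bounded if all members have diameter $\le D$. An $n$-dimensional control function of $X$ is $D_X\colon\mathbb R_+\to\mathbb R_+$ such that for every $r>0$ there are $r$-disjoint, $D_X(r)$-bounded families $\mathcal U_1,\dots,\mathcal U_{n+1}$ whose union covers $X$. For $k\ge n+1\ge1$, an $(n,k)$-dimensional control function of $X$ is $D_X\colon\mathbb R_+\to\mathbb R_+$ such that for every $r>0$ there are families $\mathcal U_1,\dots,\mathcal U_k$ of subsets of $X$, each $r$-disjoint and $D_X(r)$-bounded, such that every $x\in X$ belongs to members of at least $k-n$ of the families (equivalently, $\bigcup_{i\in T}\mathcal U_i$ covers $X$ for every $T\subset\{1,\dots,k\}$ with $|T|=n+1$). *)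

theory Defs
  imports "HOL-Analysis.Analysis"
begin

definition r_disjoint :: "real \<Rightarrow> 'a::metric_space set set \<Rightarrow> bool" where
  "r_disjoint r \<U> \<longleftrightarrow>
     (\<forall>U\<in>\<U>. \<forall>V\<in>\<U>. U \<noteq> V \<longrightarrow> (\<forall>a\<in>U. \<forall>b\<in>V. r \<le> dist a b))"

definition D_bounded :: "real \<Rightarrow> 'a::metric_space set set \<Rightarrow> bool" where
  "D_bounded D \<U> \<longleftrightarrow> (\<forall>U\<in>\<U>. \<forall>a\<in>U. \<forall>b\<in>U. dist a b \<le> D)"

definition dim_control_function :: "'a::metric_space set \<Rightarrow> nat \<Rightarrow> (real \<Rightarrow> real) \<Rightarrow> bool" where
  "dim_control_function X n DX \<longleftrightarrow>
     (\<forall>r>0. 0 \<le> DX r) \<and>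
     (\<forall>r>0. \<exists>\<U> :: nat \<Rightarrow> 'a set set.
        (\<forall>i<n+1. (\<forall>U\<in>\<U> i. U \<subseteq> X) \<and> r_disjoint r (\<U> i) \<and> D_bounded (DX r) (\<U> i)) \<and>
        X \<subseteq> (\<Union>i<n+1. \<Union>(\<U> i)))"

definition nk_control_function :: "'a::metric_space set \<Rightarrow> nat \<Rightarrow> nat \<Rightarrow> (real \<Rightarrow> real) \<Rightarrow> bool" where
  "nk_control_function X n k DX \<longleftrightarrow>
     (\<forall>r>0. 0 \<le> DX r) \<and>
     (\<forall>r>0. \<exists>\<U> :: nat \<Rightarrow> 'a set set.
        (\<forall>i<k. (\<forall>U\<in>\<U> i. U \<subseteq> X) \<and> r_disjoint r (\<U> i) \<and> D_bounded (DX r) (\<U> i)) \<and>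
        (\<forall>x\<in>X. k - n \<le> card {i. i < k \<and> (\<exists>U\<in>\<U> i. x \<in> U)}))"

end

theory Submission
  imports Defs
begin

lemma step_lemma:
  fixes X :: "'a::metric_space set"
  assumes nk: "nk_control_function X n k Dk" and k: "k \<ge> n+1" and r: "r > 0"
  shows "\<exists>\<V>::nat \<Rightarrow> 'a set set. (\<forall>i<Suc k. (\<forall>U\<in>\<V> i. U \<subseteq> X) \<and> r_disjoint r (\<V> i)
            \<and> D_bounded (Dk (3*r) + 2*r) (\<V> i))
          \<and> (\<forall>x\<in>X. Suc k - n \<le> card {i. i < Suc k \<and> (\<exists>U\<in>\<V> i. x \<in> U)})"
proof -
  have r3: "3*r > 0" using r by simp
  obtain \<U> :: "nat \<Rightarrow> 'a set set" where
    U1: "\<And>i. i<k \<Longrightarrow> (\<forall>U\<in>\<U> i. U \<subseteq> X) \<and> r_disjoint (3*r) (\<U> i) \<and> D_bounded (Dk (3*r)) (\<U> i)"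
    and U2: "\<And>x. x\<in>X \<Longrightarrow> k - n \<le> card {i. i < k \<and> (\<exists>U\<in>\<U> i. x \<in> U)}"
    using nk r3 unfolding nk_control_function_def by meson
  define N where "N U = {x\<in>X. \<exists>u\<in>U. dist x u < r}" for U
  define S where "S x = {i. i<k \<and> (\<exists>U\<in>\<U> i. x\<in>U)}" for x
  define S' where "S' x = {i. i<k \<and> (\<exists>U\<in>\<U> i. \<exists>u\<in>U. dist x u < r)}" for x
  define P where "P U T = {x\<in>U. S' x = T \<and> card T \<le> k - n}" for U T
  define \<V> where "\<V> i = (if i<k then N ` \<U> i else {P U T | U T. T \<noteq> {} \<and> U \<in> \<U> (Min T)})" for i
  have finS': "finite (S' x)" for x unfolding S'_def by simp
  have SS': "S x \<subseteq> S' x" for x unfolding S_def S'_def using r by force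
  have cardS: "k - n \<le> card (S x)" if "x\<in>X" for x using U2[OF that] unfolding S_def .
  have inX: "U \<subseteq> X" if "i<k" "U \<in> \<U> i" for i U using U1[OF that(1)] that(2) by blast
  have keyP: "x \<in> X \<and> S' x = T \<and> S x = T \<and> x \<in> U" if "x \<in> P U T" "U \<in> \<U> (Min T)" "T \<noteq> {}" for x U T
  proof -
    have xU: "x \<in> U" "S' x = T" "card T \<le> k - n" using that(1) unfolding P_def by auto
    have "Min T \<in> T" using finS' xU(2) that(3) by (metis Min_in)
    hence mk: "Min T < k" using xU(2) unfolding S'_def by auto
    hence xX: "x \<in> X" using inX[OF mk that(2)] xU by blast
    have "card (S x) \<le> card (S' x)" using card_mono[OF finS' SS'[of x]] .
    hence "card (S x) = card (S' x)" using cardS[OF xX] xU by simp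
    hence "S x = S' x" using card_subset_eq[OF finS' SS'[of x]] by blast
    thus ?thesis using xU xX by simp
  qed
  have disjU: "r \<le> dist a b" if "i<k" "U \<in> \<U> i" "V \<in> \<U> i" "U \<noteq> V" "a \<in> U" "b \<in> V" for i U V a b
  proof -
    have "3*r \<le> dist a b" using U1[OF that(1)] that unfolding r_disjoint_def by blast
    thus ?thesis using r by simp
  qed
  have part1: "(\<forall>U\<in>\<V> i. U \<subseteq> X) \<and> r_disjoint r (\<V> i) \<and> D_bounded (Dk (3*r) + 2*r) (\<V> i)"
    if "i < Suc k" for i
  proof (cases "i < k")
    case True
    have V: "\<V> i = N ` \<U> i" using True unfolding \<V>_def by simp
    have a: "\<forall>U\<in>\<V> i. U \<subseteq> X" unfolding V N_def by auto
    have b: "r_disjoint r (\<V> i)"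
      unfolding r_disjoint_def
    proof (intro ballI impI)
      fix A B a b assume AB: "A \<in> \<V> i" "B \<in> \<V> i" "A \<noteq> B" "a \<in> A" "b \<in> B"
      then obtain U V where UV: "U \<in> \<U> i" "V \<in> \<U> i" "A = N U" "B = N V" using V by auto
      hence "U \<noteq> V" using AB by auto
      obtain u v where uv: "u \<in> U" "v \<in> V" "dist a u < r" "dist b v < r"
        using AB UV unfolding N_def by auto
      have "3*r \<le> dist u v" using U1[OF True] UV uv \<open>U \<noteq> V\<close> unfolding r_disjoint_def by blast
      moreover have "dist u v \<le> dist u a + dist a b + dist b v"
        by (metis dist_commute dist_triangle add.commute add_mono order_trans add_left_mono)
      ultimately show "r \<le> dist a b" using uv by (simp add: dist_commute)
    qed
    have c: "D_bounded (Dk (3*r) + 2*r) (\<V> i)"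
      unfolding D_bounded_def
    proof (intro ballI)
      fix A a b assume AB: "A \<in> \<V> i" "a \<in> A" "b \<in> A"
      then obtain U where UV: "U \<in> \<U> i" "A = N U" using V by auto
      obtain u v where uv: "u \<in> U" "v \<in> U" "dist a u < r" "dist b v < r"
        using AB UV unfolding N_def by auto
      have "dist u v \<le> Dk (3*r)" using U1[OF True] UV uv unfolding D_bounded_def by blast
      moreover have "dist a b \<le> dist a u + dist u v + dist v b"
        by (metis dist_triangle add_right_mono order_trans)
      ultimately show "dist a b \<le> Dk (3*r) + 2*r" using uv by (simp add: dist_commute)
    qed
    show ?thesis using a b c by blast
  next
    case False
    have V: "\<V> i = {P U T | U T. T \<noteq> {} \<and> U \<in> \<U> (Min T)}" using False unfolding \<V>_def by simp
    have a: "\<forall>U\<in>\<V> i. U \<subseteq> X" unfolding V using keyP by blast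
    have b: "r_disjoint r (\<V> i)"
      unfolding r_disjoint_def
    proof (intro ballI impI)
      fix A B a b assume AB: "A \<in> \<V> i" "B \<in> \<V> i" "A \<noteq> B" "a \<in> A" "b \<in> B"
      obtain U T where UV1: "T \<noteq> {}" "U \<in> \<U> (Min T)" "A = P U T"
        using AB(1) unfolding V by blast
      obtain V T' where UV2: "T' \<noteq> {}" "V \<in> \<U> (Min T')" "B = P V T'"
        using AB(2) unfolding V by blast
      note UV = UV1 UV2
      have ka: "a \<in> X" "S' a = T" "S a = T" "a \<in> U" using keyP[of a U T] AB UV by auto
      have kb: "b \<in> X" "S' b = T'" "S b = T'" "b \<in> V" using keyP[of b V T'] AB UV by auto
      show "r \<le> dist a b"
      proof (cases "T = T'")
        case True
        have "Min T \<in> T" using finS' ka UV by (metis Min_in)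
        hence mk: "Min T < k" using ka unfolding S'_def by auto
        have "U \<noteq> V" using AB UV True by auto
        thus ?thesis using disjU[OF mk UV(2) _ _ ka(4) kb(4)] UV True by auto
      next
        case False
        have c1: "card T \<le> k - n" using AB(4) UV(3) unfolding P_def by blast
        have c2: "card T' \<le> k - n" using AB(5) UV(6) unfolding P_def by blast
        have c3: "k - n \<le> card T" using cardS[OF ka(1)] ka(3) by simp
        have c4: "k - n \<le> card T'" using cardS[OF kb(1)] kb(3) by simp
        have cT: "card T = k - n" "card T' = k - n" using c1 c2 c3 c4 by linarith+
        have "\<not> T \<subseteq> T'"
          using False cT finS' kb(2) card_subset_eq by metis
        then obtain j where j: "j \<in> T" "j \<notin> T'" by blast
        hence "j \<in> S a" using ka by simp
        then obtain W where W: "j < k" "W \<in> \<U> j" "a \<in> W" unfolding S_def by auto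
        have "j \<notin> S' b" using kb j by simp
        hence "\<not> dist b a < r" using W unfolding S'_def by auto
        thus ?thesis by (simp add: dist_commute)
      qed
    qed
    have c: "D_bounded (Dk (3*r) + 2*r) (\<V> i)"
      unfolding D_bounded_def
    proof (intro ballI)
      fix A a b assume AB: "A \<in> \<V> i" "a \<in> A" "b \<in> A"
      then obtain U T where UV: "T \<noteq> {}" "U \<in> \<U> (Min T)" "A = P U T" using V by auto
      have ka: "a \<in> U" "b \<in> U" "S' a = T" using keyP[of a U T] keyP[of b U T] AB UV by auto
      have "Min T \<in> T" using finS' ka UV by (metis Min_in)
      hence mk: "Min T < k" using ka unfolding S'_def by auto
      have "dist a b \<le> Dk (3*r)" using U1[OF mk] UV ka unfolding D_bounded_def by blast
      thus "dist a b \<le> Dk (3*r) + 2*r" using r by simp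
    qed
    show ?thesis using a b c by blast
  qed
  have part2: "Suc k - n \<le> card {i. i < Suc k \<and> (\<exists>U\<in>\<V> i. x \<in> U)}" if xX: "x \<in> X" for x
  proof -
    let ?C = "{i. i < Suc k \<and> (\<exists>U\<in>\<V> i. x \<in> U)}"
    have finC: "finite ?C" by simp
    have sub: "S' x \<subseteq> ?C"
    proof
      fix i assume "i \<in> S' x"
      then obtain U u where "i < k" "U \<in> \<U> i" "u \<in> U" "dist x u < r" unfolding S'_def by auto
      hence "x \<in> N U" "N U \<in> \<V> i" using xX unfolding N_def \<V>_def by auto
      thus "i \<in> ?C" using \<open>i<k\<close> by auto
    qed
    show ?thesis
    proof (cases "card (S' x) \<le> k - n")
      case False
      hence "Suc k - n \<le> card (S' x)" using k by linarith
      thus ?thesis using card_mono[OF finC sub] by linarith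
    next
      case True
      have "card (S x) \<le> card (S' x)" using card_mono[OF finS' SS'[of x]] .
      hence "card (S x) = card (S' x)" using cardS[OF xX] True by linarith
      hence eq: "S x = S' x" using card_subset_eq[OF finS' SS'[of x]] by blast
      have ne: "S' x \<noteq> {}" using cardS[OF xX] k eq by auto
      have "Min (S' x) \<in> S x" using eq ne finS' by (metis Min_in)
      then obtain U where U: "U \<in> \<U> (Min (S' x))" "x \<in> U" unfolding S_def by auto
      have "x \<in> P U (S' x)" using U True unfolding P_def by auto
      moreover have "P U (S' x) \<in> \<V> k" using U ne unfolding \<V>_def by auto
      ultimately have "k \<in> ?C" by auto
      moreover have "k \<notin> S' x" unfolding S'_def by auto
      ultimately have "insert k (S' x) \<subseteq> ?C" using sub by auto
      hence "card (insert k (S' x)) \<le> card ?C" using card_mono[OF finC] by blast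
      hence f1: "Suc (card (S' x)) \<le> card ?C" using finS' \<open>k \<notin> S' x\<close> by simp
      have f2: "k - n \<le> card (S' x)" using cardS[OF xX] eq by simp
      have f3: "Suc k - n \<le> Suc (card (S' x))" using f2 k by linarith
      show ?thesis using f1 f3 by (rule order_trans[rotated])
    qed
  qed
  show ?thesis using part1 part2 by blast
qed

theorem mainTheorem6:
  fixes X :: "'a::metric_space set" and n :: nat and D :: "nat \<Rightarrow> real \<Rightarrow> real"
  assumes "dim_control_function X n (D (n+1))"
    and "\<And>i r. i \<ge> n+1 \<Longrightarrow> r > 0 \<Longrightarrow> D (Suc i) r = D i (3*r) + 2*r"
  shows "\<forall>k\<ge>n+1. nk_control_function X n k (D k)"
proof (intro allI impI)
  fix k assume "k \<ge> n+1"
  thus "nk_control_function X n k (D k)"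
  proof (induction k rule: dec_induct)
    case base
    show ?case unfolding nk_control_function_def
    proof (intro conjI allI impI)
      fix r :: real assume "r > 0"
      thus "0 \<le> D (n+1) r" using assms(1) unfolding dim_control_function_def by blast
    next
      fix r :: real assume r: "r > 0"
      then obtain \<U> :: "nat \<Rightarrow> 'a set set" where
        U1: "\<forall>i<n+1. (\<forall>U\<in>\<U> i. U \<subseteq> X) \<and> r_disjoint r (\<U> i) \<and> D_bounded (D (n+1) r) (\<U> i)"
        and U2: "X \<subseteq> (\<Union>i<n+1. \<Union>(\<U> i))"
        using assms(1) unfolding dim_control_function_def by meson
      have "\<forall>x\<in>X. n + 1 - n \<le> card {i. i < n+1 \<and> (\<exists>U\<in>\<U> i. x \<in> U)}"
      proof
        fix x assume "x \<in> X"
        then obtain i where "i < n+1" "\<exists>U\<in>\<U> i. x \<in> U" using U2 by blast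
        hence "{i. i < n+1 \<and> (\<exists>U\<in>\<U> i. x \<in> U)} \<noteq> {}" by blast
        moreover have "finite {i. i < n+1 \<and> (\<exists>U\<in>\<U> i. x \<in> U)}" by simp
        ultimately show "n + 1 - n \<le> card {i. i < n+1 \<and> (\<exists>U\<in>\<U> i. x \<in> U)}"
          by (simp add: Suc_leI card_gt_0_iff)
      qed
      thus "\<exists>\<U> :: nat \<Rightarrow> 'a set set.
        (\<forall>i<n+1. (\<forall>U\<in>\<U> i. U \<subseteq> X) \<and> r_disjoint r (\<U> i) \<and> D_bounded (D (n+1) r) (\<U> i)) \<and>
        (\<forall>x\<in>X. n + 1 - n \<le> card {i. i < n+1 \<and> (\<exists>U\<in>\<U> i. x \<in> U)})" using U1 by blast
    qed
  next
    case (step k)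
    show ?case unfolding nk_control_function_def
    proof (intro conjI allI impI)
      fix r :: real assume r: "r > 0"
      have "0 \<le> D k (3*r)" using step.IH r unfolding nk_control_function_def by simp
      thus "0 \<le> D (Suc k) r" using assms(2)[OF step.hyps(1) r] r by simp
    next
      fix r :: real assume r: "r > 0"
      from step_lemma[OF step.IH step.hyps(1) r]
      show "\<exists>\<V>::nat \<Rightarrow> 'a set set. (\<forall>i<Suc k. (\<forall>U\<in>\<V> i. U \<subseteq> X) \<and> r_disjoint r (\<V> i)
            \<and> D_bounded (D (Suc k) r) (\<V> i))
          \<and> (\<forall>x\<in>X. Suc k - n \<le> card {i. i < Suc k \<and> (\<exists>U\<in>\<V> i. x \<in> U)})"
        using assms(2)[OF step.hyps(1) r] by simp
    qed
  qed
qed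

end
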